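(* Under the setting below, let $(x^*,z^*,s^* )$ with multiplier $\lambda^*$ for (C) (and nonnegative multipliers for the other constraints) be a KKT point of (P). Then for every $t$ with $(\beta_t,\theta_t)\in\Omega^{III}_t(\lambda^* )$ we have $(x_t^*,z_t^* )=(x^{III}_t(\lambda^* ),z^{III}_t(\lambda^* ))$, where $x^{III}_t(\lambda)=u_t'^{-1}\big(X_t(\lambda)/\theta_t\big)$, $z^{III}_t(\lambda)=x^{III}_t(\lambda)-a_t(\beta_t,\lambda)$, and $\Omega^{III}_t(\lambda)=\Big\{(\beta,\theta):\beta>0,\ \frac{X_t(\lambda)}{u_t'(a_t(\beta,\lambda))}\le\theta\le\frac{X_t(\lambda)}{u_t'(1)}\Big\}$.
   Context: Fix an integer $T\ge 1$, a data cap $Q>0$ and an overage fee $\pi>0$. For each $t\in\{1,\dots,T\}$ fix reals $d_t\ge 0$, $r_t\ge 0$, $c_t>0$, $p_t>0$, $\theta_t>0$, $\beta_t>0$ and functions $u_t,e_t:[0,\infty)\to\mathbb{R}$ such that: $u_t$ is continuous, increasing and strictly concave, differentiable on $(0,\infty)$, and $u_t':(0,\infty)\to(0,\infty)$ is a strictly decreasing bijection with inverse $u_t'^{-1}$; $e_t$ is increasing, strictly convex and continuously differentiable, and $e_t':[0,\infty)\to[0,\infty)$ is a strictly increasing bijection with inverse $e_t'^{-1}$. For $0\le z\le x\le 1$ let $\tilde f_t(x,z)=\theta_t u_t(x)-\beta_t e_t((x-z)c_t)-p_t c_t z$ and $\tilde h_t(x,z)=d_t x+r_t z$. Problem (P):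 maximize $\sum_{t=1}^T \tilde f_t(x_t,z_t)-\pi s$ over $x,z\in\mathbb{R}^T$, $s\in\mathbb{R}$, subject to $0\le z_t\le x_t\le 1$ for all $t$, $s\ge 0$, and (C): $s\ge \sum_{t=1}^T\tilde h_t(x_t,z_t)-Q$. A KKT point of (P) consists of a feasible $(x^*,z^*,s^* )$ and nonnegative Lagrange multipliers for all constraints satisfying stationarity of the Lagrangian and complementary slackness; $\lambda^*$ denotes the multiplier of (C) (the shadow price of wireless data). For $\lambda\ge 0$ and $\beta>0$ write $a_t(\beta,\lambda)=\frac{1}{c_t}\,e_t'^{-1}\!\Big(\frac{p_tc_t+r_t\lambda}{\beta c_t}\Big)$ and $X_t(\lambda)=p_tc_t+(d_t+r_t)\lambda$. *)

theory Defs
  imports "HOL-Analysis.Analysis"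
begin

definition strict_convex_on :: "real set \<Rightarrow> (real \<Rightarrow> real) \<Rightarrow> bool" where
  "strict_convex_on S f \<longleftrightarrow> convex S \<and>
    (\<forall>x\<in>S. \<forall>y\<in>S. \<forall>u. x \<noteq> y \<longrightarrow> 0 < u \<longrightarrow> u < 1 \<longrightarrow>
        f (u * x + (1 - u) * y) < u * f x + (1 - u) * f y)"

definition strict_concave_on :: "real set \<Rightarrow> (real \<Rightarrow> real) \<Rightarrow> bool" where
  "strict_concave_on S f \<longleftrightarrow> strict_convex_on S (\<lambda>x. - f x)"

text \<open>a_t(beta,lambda) = (1/c_t) e_t'^{-1}((p_t c_t + r_t lambda)/(beta c_t)),
  where ed is e_t' (a bijection [0,oo) -> [0,oo)).\<close>
definition a_fun :: "(real \<Rightarrow> real) \<Rightarrow> real \<Rightarrow> real \<Rightarrow> real \<Rightarrow> real \<Rightarrow> real \<Rightarrow> real" where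
  "a_fun ed c p r \<beta> lam = (1 / c) * the_inv_into {0..} ed ((p * c + r * lam) / (\<beta> * c))"

definition X_fun :: "real \<Rightarrow> real \<Rightarrow> real \<Rightarrow> real \<Rightarrow> real \<Rightarrow> real" where
  "X_fun c p d r lam = p * c + (d + r) * lam"

text \<open>x^III_t(lambda) = u_t'^{-1}(X_t(lambda)/theta_t), ud is u_t' : (0,oo) -> (0,oo).\<close>
definition xIII :: "(real \<Rightarrow> real) \<Rightarrow> real \<Rightarrow> real \<Rightarrow> real \<Rightarrow> real \<Rightarrow> real \<Rightarrow> real \<Rightarrow> real" where
  "xIII ud c p d r \<theta> lam = the_inv_into {0<..} ud (X_fun c p d r lam / \<theta>)"

definition OmegaIII :: "(real \<Rightarrow> real) \<Rightarrow> (real \<Rightarrow> real) \<Rightarrow> real \<Rightarrow> real \<Rightarrow> real \<Rightarrow> real \<Rightarrow> real \<Rightarrow> (real \<times> real) set" where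
  "OmegaIII ud ed c p d r lam = {(\<beta>, \<theta>). \<beta> > 0 \<and>
      X_fun c p d r lam / ud (a_fun ed c p r \<beta> lam) \<le> \<theta> \<and>
      \<theta> \<le> X_fun c p d r lam / ud 1}"

end

theory Submission
  imports Defs
begin

lemma no_deriv_0:
  fixes u ud :: "real \<Rightarrow> real"
  assumes ucont: "continuous_on {0..} u"
    and uder: "\<And>y. y > 0 \<Longrightarrow> (u has_real_derivative ud y) (at y)"
    and dec: "strict_antimono_on {0<..} ud"
    and bij: "bij_betw ud {0<..} {0<..}"
    and D: "(u has_real_derivative D) (at 0 within {0..})"
  shows False
proof -
  have "max D 0 + 1 \<in> ud ` {0<..}" using bij unfolding bij_betw_def by auto
  then obtain y0 where y0: "y0 > 0" "ud y0 = max D 0 + 1" by auto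
  have q: "(u h - u 0) / h > D + 1" if h: "0 < h" "h < y0" for h
  proof -
    have "\<exists>l z. 0 < z \<and> z < h \<and> DERIV u z :> l \<and> u h - u 0 = (h - 0) * l"
      apply (rule MVT)
      using h apply simp
      using continuous_on_subset[OF ucont] apply (simp add: subset_eq)
      using uder real_differentiable_def by fastforce
    then obtain l z where lz: "0 < z" "z < h" "DERIV u z :> l" "u h - u 0 = h * l" by auto
    have "l = ud z" using DERIV_unique[OF lz(3) uder[OF lz(1)]] .
    moreover have "ud z > ud y0"
    proof -
      have "z < y0" using lz h by simp
      then show ?thesis using dec lz(1) y0(1) unfolding monotone_on_def by simp
    qed
    ultimately show ?thesis using lz(4) h y0 by auto
  qed
  from D have "((\<lambda>y. (u y - u 0) / (y - 0)) \<longlongrightarrow> D) (at 0 within {0..})"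
    by (simp add: has_field_derivative_iff)
  then have "\<forall>\<^sub>F y in at 0 within {0..}. dist ((u y - u 0) / (y - 0)) D < 1"
    by (rule tendstoD) simp
  then obtain dd where dd: "dd > 0" "\<forall>y\<in>{0..}. y \<noteq> 0 \<and> dist y 0 < dd \<longrightarrow>
      dist ((u y - u 0) / (y - 0)) D < 1"
    unfolding eventually_at by (elim exE conjE) (rule that)
  define h where "h = min dd y0 / 2"
  have h: "0 < h" "h < y0" "h < dd" using dd y0 by (auto simp: h_def)
  have "dist ((u h - u 0) / (h - 0)) D < 1" using dd(2) h by (simp add: dist_real_def)
  moreover have "(u h - u 0) / h > D + 1" using q h by auto
  ultimately show False by (simp add: dist_real_def)
qed
lemma core:
  fixes c p d r th b lam m1 m2 m3 x z :: real and u ud ed :: "real \<Rightarrow> real"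
  assumes par: "d \<ge> 0" "r \<ge> 0" "c > 0" "p > 0" "th > 0" "b > 0" "lam \<ge> 0"
    and ucont: "continuous_on {0..} u"
    and uder: "\<And>y. y > 0 \<Longrightarrow> (u has_real_derivative ud y) (at y)"
    and dec: "strict_antimono_on {0<..} ud"
    and ubij: "bij_betw ud {0<..} {0<..}"
    and inc: "strict_mono_on {0..} ed"
    and ebij: "bij_betw ed {0..} {0..}"
    and feas: "0 \<le> z" "z \<le> x" "x \<le> 1"
    and mn: "m1 \<ge> 0" "m2 \<ge> 0" "m3 \<ge> 0"
    and sx: "\<exists>Du. (u has_real_derivative Du) (at x within {0..}) \<and>
        th * Du - b * c * ed ((x - z) * c) + m2 - m3 - lam * d = 0"
    and sz: "b * c * ed ((x - z) * c) - p * c + m1 - m2 - lam * r = 0"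
    and cs: "m1 * z = 0" "m2 * (x - z) = 0" "m3 * (1 - x) = 0"
    and om: "(b, th) \<in> OmegaIII ud ed c p d r lam"
  shows "x = xIII ud c p d r th lam \<and> z = xIII ud c p d r th lam - a_fun ed c p r b lam"
proof -
  obtain Du where Du: "(u has_real_derivative Du) (at x within {0..})"
    and sx': "th * Du - b * c * ed ((x - z) * c) + m2 - m3 - lam * d = 0" using sx by blast
  define X where "X = X_fun c p d r lam"
  have Xpos: "X > 0" unfolding X_def X_fun_def using par by (simp add: add_pos_nonneg)
  define K where "K = (p * c + r * lam) / (b * c)"
  have Kpos: "K > 0" unfolding K_def using par by (simp add: add_pos_nonneg)
  define e0 where "e0 = the_inv_into {0..} ed K"
  have einj: "inj_on ed {0..}" and eim: "ed ` {0..} = {0..}" using ebij by (auto simp: bij_betw_def)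
  have e0: "e0 \<ge> 0" "ed e0 = K"
    using the_inv_into_into[OF einj, of K "{0..}"] f_the_inv_into_f[OF einj, of K] Kpos eim
    unfolding e0_def by auto
  have ed0: "ed 0 = 0"
  proof -
    obtain y where y: "y \<ge> 0" "ed y = 0" using eim by (metis atLeast_iff imageE order_refl)
    have "ed 0 \<ge> 0" using eim by auto
    moreover have "y > 0 \<Longrightarrow> ed 0 < ed y" using inc unfolding monotone_on_def by auto
    ultimately show ?thesis using y by force
  qed
  have e0pos: "e0 > 0" using e0 ed0 Kpos by (metis less_eq_real_def less_irrefl)
  define a where "a = a_fun ed c p r b lam"
  have a_eq: "a = e0 / c" unfolding a_def a_fun_def e0_def K_def by simp
  have apos: "a > 0" using a_eq e0pos par by simp
  have ac: "a * c = e0" using a_eq par by simp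
  define xi where "xi = xIII ud c p d r th lam"
  have uinj: "inj_on ud {0<..}" and uim: "ud ` {0<..} = {0<..}" using ubij by (auto simp: bij_betw_def)
  have xi: "xi > 0" "ud xi = X / th"
    using the_inv_into_into[OF uinj, of "X / th" "{0<..}"] f_the_inv_into_f[OF uinj, of "X/th"]
      Xpos par uim unfolding xi_def xIII_def X_def[symmetric] by auto
  have decr: "\<And>y w. 0 < y \<Longrightarrow> y < w \<Longrightarrow> ud w < ud y"
    using dec unfolding monotone_on_def by auto
  have incr: "\<And>y w. 0 \<le> y \<Longrightarrow> y < w \<Longrightarrow> ed y < ed w"
    using inc unfolding monotone_on_def by auto
  have udpos: "\<And>y. y > 0 \<Longrightarrow> ud y > 0" using uim by auto
  from om have om1: "X / ud a \<le> th" and om2: "th \<le> X / ud 1"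
    unfolding OmegaIII_def X_def a_def by auto
  have "X / th \<le> ud a" using om1 udpos[OF apos] par Xpos by (simp add: field_simps)
  then have xia: "a \<le> xi" using decr[of xi a] xi apos by (metis not_le)
  have "ud 1 \<le> X / th" using om2 udpos[of 1] par Xpos by (simp add: field_simps)
  then have xi1: "xi \<le> 1" using decr[of 1 xi] xi by (metis not_le zero_less_one)
  have Dux: "x > 0 \<Longrightarrow> Du = ud x"
  proof -
    assume x: "x > 0"
    have "x \<in> interior {0..}" using x by simp
    then have "at x within {0..} = at x" by (rule at_within_interior)
    then show ?thesis using Du DERIV_unique uder[OF x] by metis
  qed
  have x0: "x > 0"
  proof (rule ccontr)
    assume "\<not> x > 0"
    then have "x = 0" using feas by simp
    then show False using no_deriv_0[OF ucont uder dec ubij] Du by blast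
  qed
  have sum: "th * ud x + m1 - m3 = X" using sx' sz Dux[OF x0] unfolding X_def X_fun_def
    by (simp add: algebra_simps)
  have edK: "ed (a * c) = K" using ac e0 by simp
  have zB: "b * c * ed ((x - z) * c) = b * c * K + m2 - m1"
  proof -
    have "b * c * K = p * c + r * lam" unfolding K_def using par by simp
    then show ?thesis using sz by (simp add: algebra_simps)
  qed
  have w: "x - z = a"
  proof (rule ccontr)
    assume ne: "x - z \<noteq> a"
    show False
    proof (cases "x - z > a")
      case True
      then have "ed (a * c) < ed ((x - z) * c)" using incr[of "a*c" "(x-z)*c"] apos par by simp
      then have "b * c * K < b * c * ed ((x - z) * c)" using edK par by simp
      then have "m2 > 0" using zB mn by simp
      then show False using cs(2) True apos by simp
    next
      case False
      then have lt: "x - z < a" using ne by simp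
      then have "ed ((x - z) * c) < ed (a * c)" using incr[of "(x-z)*c" "a*c"] feas par by simp
      then have "b * c * ed ((x - z) * c) < b * c * K" using edK par by simp
      then have "m1 > 0" using zB mn by simp
      then have "z = 0" using cs(1) by simp
      then have "x < a" using lt by simp
      then have "x < 1" "x < xi" using xia xi1 by auto
      then have "m3 = 0" using cs(3) by simp
      have "ud xi < ud x" using decr x0 \<open>x < xi\<close> by simp
      then have "th * ud x > X" using xi par by (simp add: field_simps)
      then show False using sum \<open>m3 = 0\<close> mn by simp
    qed
  qed
  have "x = xi"
  proof (rule ccontr)
    assume ne: "x \<noteq> xi"
    show False
    proof (cases "x < xi")
      case True
      then have "m3 = 0" using cs(3) xi1 by simp
      have "ud xi < ud x" using decr x0 True by simp
      then have "th * ud x > X" using xi par by (simp add: field_simps)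
      then show False using sum \<open>m3 = 0\<close> mn by simp
    next
      case False
      then have gt: "xi < x" using ne by simp
      then have "z > 0" using w xia by simp
      then have "m1 = 0" using cs(1) by simp
      have "ud x < ud xi" using decr[OF xi(1) gt] by simp
      then have "th * ud x < X" using xi par by (simp add: field_simps)
      then show False using sum \<open>m1 = 0\<close> mn by simp
    qed
  qed
  then show ?thesis using w unfolding xi_def a_def by simp
qed

theorem lemma3:
  fixes T :: nat and Q \<pi> :: real
    and d r c p \<theta> \<beta> :: "nat \<Rightarrow> real"
    and u e ud ed :: "nat \<Rightarrow> real \<Rightarrow> real"
    and x z \<mu>1 \<mu>2 \<mu>3 :: "nat \<Rightarrow> real" and s \<nu> lam :: real
  assumes T: "T \<ge> 1" and Q: "Q > 0" and pi: "\<pi> > 0"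
    and params: "\<And>t. t \<in> {1..T} \<Longrightarrow>
        d t \<ge> 0 \<and> r t \<ge> 0 \<and> c t > 0 \<and> p t > 0 \<and> \<theta> t > 0 \<and> \<beta> t > 0"
    \<comment> \<open>assumptions on u_t, with ud t = u_t'\<close>
    and u_cont: "\<And>t. t \<in> {1..T} \<Longrightarrow> continuous_on {0..} (u t)"
    and u_mono: "\<And>t. t \<in> {1..T} \<Longrightarrow> mono_on {0..} (u t)"
    and u_sconc: "\<And>t. t \<in> {1..T} \<Longrightarrow> strict_concave_on {0..} (u t)"
    and u_deriv: "\<And>t y. t \<in> {1..T} \<Longrightarrow> y > 0 \<Longrightarrow> (u t has_real_derivative ud t y) (at y)"
    and ud_decr: "\<And>t. t \<in> {1..T} \<Longrightarrow> strict_antimono_on {0<..} (ud t)"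
    and ud_bij: "\<And>t. t \<in> {1..T} \<Longrightarrow> bij_betw (ud t) {0<..} {0<..}"
    \<comment> \<open>assumptions on e_t, with ed t = e_t'\<close>
    and e_mono: "\<And>t. t \<in> {1..T} \<Longrightarrow> mono_on {0..} (e t)"
    and e_sconv: "\<And>t. t \<in> {1..T} \<Longrightarrow> strict_convex_on {0..} (e t)"
    and e_deriv: "\<And>t y. t \<in> {1..T} \<Longrightarrow> y \<ge> 0 \<Longrightarrow>
        (e t has_real_derivative ed t y) (at y within {0..})"
    and ed_cont: "\<And>t. t \<in> {1..T} \<Longrightarrow> continuous_on {0..} (ed t)"
    and ed_incr: "\<And>t. t \<in> {1..T} \<Longrightarrow> strict_mono_on {0..} (ed t)"
    and ed_bij: "\<And>t. t \<in> {1..T} \<Longrightarrow> bij_betw (ed t) {0..} {0..}"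
    \<comment> \<open>KKT point of (P): primal feasibility\<close>
    and feas: "\<And>t. t \<in> {1..T} \<Longrightarrow> 0 \<le> z t \<and> z t \<le> x t \<and> x t \<le> 1"
    and s_nonneg: "s \<ge> 0"
    and C: "s \<ge> (\<Sum>t=1..T. d t * x t + r t * z t) - Q"
    \<comment> \<open>dual feasibility\<close>
    and mult_nonneg: "\<And>t. t \<in> {1..T} \<Longrightarrow> \<mu>1 t \<ge> 0 \<and> \<mu>2 t \<ge> 0 \<and> \<mu>3 t \<ge> 0"
    and \<nu>_nonneg: "\<nu> \<ge> 0" and lam_nonneg: "lam \<ge> 0"
    \<comment> \<open>stationarity of the Lagrangian
        sum_t f_t - pi s + sum_t (mu1 z + mu2 (x - z) + mu3 (1 - x)) + nu s
          + lambda (s - sum_t h_t + Q)\<close>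
    and stat_x: "\<And>t. t \<in> {1..T} \<Longrightarrow> \<exists>Du. (u t has_real_derivative Du) (at (x t) within {0..}) \<and>
        \<theta> t * Du - \<beta> t * c t * ed t ((x t - z t) * c t) + \<mu>2 t - \<mu>3 t - lam * d t = 0"
    and stat_z: "\<And>t. t \<in> {1..T} \<Longrightarrow>
        \<beta> t * c t * ed t ((x t - z t) * c t) - p t * c t + \<mu>1 t - \<mu>2 t - lam * r t = 0"
    and stat_s: "- \<pi> + \<nu> + lam = 0"
    \<comment> \<open>complementary slackness\<close>
    and cs: "\<And>t. t \<in> {1..T} \<Longrightarrow>
        \<mu>1 t * z t = 0 \<and> \<mu>2 t * (x t - z t) = 0 \<and> \<mu>3 t * (1 - x t) = 0"
    and cs_s: "\<nu> * s = 0"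
    and cs_C: "lam * (s - ((\<Sum>t=1..T. d t * x t + r t * z t) - Q)) = 0"
  shows "\<forall>t\<in>{1..T}. (\<beta> t, \<theta> t) \<in> OmegaIII (ud t) (ed t) (c t) (p t) (d t) (r t) lam \<longrightarrow>
           x t = xIII (ud t) (c t) (p t) (d t) (r t) (\<theta> t) lam \<and>
           z t = xIII (ud t) (c t) (p t) (d t) (r t) (\<theta> t) lam - a_fun (ed t) (c t) (p t) (r t) (\<beta> t) lam"
proof (intro ballI impI)
  fix t assume t: "t \<in> {1..T}"
    and om: "(\<beta> t, \<theta> t) \<in> OmegaIII (ud t) (ed t) (c t) (p t) (d t) (r t) lam"
  show "x t = xIII (ud t) (c t) (p t) (d t) (r t) (\<theta> t) lam \<and>
           z t = xIII (ud t) (c t) (p t) (d t) (r t) (\<theta> t) lam - a_fun (ed t) (c t) (p t) (r t) (\<beta> t) lam"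
    using params[OF t] lam_nonneg u_cont[OF t] u_deriv[OF t] ud_decr[OF t] ud_bij[OF t]
      ed_incr[OF t] ed_bij[OF t] feas[OF t] mult_nonneg[OF t] stat_x[OF t] stat_z[OF t] cs[OF t] om
    by (intro core) auto
qed

end
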